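(* Let $q,r,\mu,\nu$ be positive integers. For all $z\in\mathbb{C}$, \[ \mathcal{M}(z)=(I_\mu\otimes U_q(z))\,\mathcal{A}\,(I_\nu\otimes W_r(z)), \] and $\mathcal{M}(z)$ and $\mathcal{A}$ have the same rank, equal to $\min\{\mu,r\}\cdot\min\{\nu,q\}$.
   Context: Matrix indices start at $0$. $u(z)=(1,z,\dots,z^{q-1})^\top$, $w(z)=(1,z,\dots,z^{r-1})$, $M(z)=u(z)w(z)\in\mathbb{C}^{q\times r}$, and $M^{(k)}$ denotes the $k$-th derivative in $z$. $\mathcal{M}(z)\in\mathbb{C}^{\mu q\times\nu r}$ is the block matrix with $(i,j)$ block $M^{(i+j)}(z)$, $i=0,\dots,\mu-1$, $j=0,\dots,\nu-1$. $U_q(z)=(u(z),u'(z),\dots,u^{(q-1)}(z))\in\mathbb{C}^{q\times q}$ and $W_r(z)\in\mathbb{C}^{r\times r}$ is the matrix whose $i$-th row is $w^{(i)}(z)$, $i=0,\dots,r-1$. $\mathcal{A}\in\mathbb{R}^{\mu q\times\nu r}$ is the block matrix with $(i,j)$ block $A^{i+j}$, where $A^k\in\mathbb{R}^{q\times r}$ has entries $A^k_{ab}=\binom{k}{a}$ if $a+b=k$ and $0$ otherwise. *)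

theory Defs
  imports "HOL-Analysis.Analysis" "Jordan_Normal_Form.DL_Rank"
begin

definition dmon :: "nat \<Rightarrow> nat \<Rightarrow> complex \<Rightarrow> complex" where
  "dmon k n z = (deriv ^^ k) (\<lambda>w. w ^ n) z"

definition kron :: "'a::times mat \<Rightarrow> 'a mat \<Rightarrow> 'a mat" where
  "kron A B = mat (dim_row A * dim_row B) (dim_col A * dim_col B)
     (\<lambda>(i,j). A $$ (i div dim_row B, j div dim_col B) * B $$ (i mod dim_row B, j mod dim_col B))"

definition hankel_blocks :: "nat \<Rightarrow> nat \<Rightarrow> nat \<Rightarrow> nat \<Rightarrow> (nat \<Rightarrow> 'a mat) \<Rightarrow> 'a mat" where
  "hankel_blocks q r \<mu> \<nu> F = mat (\<mu> * q) (\<nu> * r)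
     (\<lambda>(i,j). F (i div q + j div r) $$ (i mod q, j mod r))"

(* M^{(k)}(z), where M(z) = u(z) w(z) has entries z^(a+b) *)
definition Mder :: "nat \<Rightarrow> nat \<Rightarrow> nat \<Rightarrow> complex \<Rightarrow> complex mat" where
  "Mder q r k z = mat q r (\<lambda>(a,b). dmon k (a + b) z)"

definition MM :: "nat \<Rightarrow> nat \<Rightarrow> nat \<Rightarrow> nat \<Rightarrow> complex \<Rightarrow> complex mat" where
  "MM q r \<mu> \<nu> z = hankel_blocks q r \<mu> \<nu> (\<lambda>k. Mder q r k z)"

(* U_q(z) = (u(z), u'(z), ..., u^{(q-1)}(z)) : column j is u^{(j)}(z) *)
definition Uq :: "nat \<Rightarrow> complex \<Rightarrow> complex mat" where
  "Uq q z = mat q q (\<lambda>(a,j). dmon j a z)"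

(* W_r(z) : row i is w^{(i)}(z) *)
definition Wr :: "nat \<Rightarrow> complex \<Rightarrow> complex mat" where
  "Wr r z = mat r r (\<lambda>(i,b). dmon i b z)"

definition Ak :: "nat \<Rightarrow> nat \<Rightarrow> nat \<Rightarrow> real mat" where
  "Ak q r k = mat q r (\<lambda>(a,b). if a + b = k then real (k choose a) else 0)"

definition AA :: "nat \<Rightarrow> nat \<Rightarrow> nat \<Rightarrow> nat \<Rightarrow> real mat" where
  "AA q r \<mu> \<nu> = hankel_blocks q r \<mu> \<nu> (Ak q r)"

end

theory Submission
  imports Defs "Jordan_Normal_Form.DL_Rank_Submatrix"
begin


definition dm :: "nat \<Rightarrow> nat \<Rightarrow> 'a::comm_semiring_1 \<Rightarrow> 'a" where
  "dm k n z = of_nat (fact k * (n choose k)) * z ^ (n - k)"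

lemma fact_choose_Suc: "fact (Suc k) * (n choose Suc k) = fact k * (n choose k) * (n - k)"
proof -
  have "Suc k * (n choose Suc k) = (n - k) * (n choose k)"
    using binomial_absorption[of k n] binomial_absorb_comp[of n k] by simp
  have "fact (Suc k) * (n choose Suc k) = fact k * (Suc k * (n choose Suc k))"
    by (simp add: fact_Suc algebra_simps)
  also have "\<dots> = fact k * ((n - k) * (n choose k))" using \<open>Suc k * (n choose Suc k) = (n - k) * (n choose k)\<close> by simp
  finally show ?thesis by (simp add: mult_ac)
qed

lemma dmon_fun: "(deriv ^^ k) (\<lambda>w::complex. w ^ n) = (\<lambda>w. dm k n w)"
proof (induction k)
  case 0
  then show ?case by (simp add: dm_def)
next
  case (Suc k)
  have "(deriv ^^ Suc k) (\<lambda>w::complex. w ^ n) = deriv (\<lambda>w. dm k n w)"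
    using Suc by simp
  also have "\<dots> = (\<lambda>w. dm (Suc k) n w)"
  proof
    fix w :: complex
    have "((\<lambda>w. dm k n w) has_field_derivative
       of_nat (fact k * (n choose k)) * (of_nat (n - k) * w ^ (n - k - 1))) (at w)"
      unfolding dm_def by (auto intro!: derivative_eq_intros)
    then have "deriv (\<lambda>w. dm k n w) w = of_nat (fact k * (n choose k)) * (of_nat (n - k) * w ^ (n - k - 1))"
      by (rule DERIV_imp_deriv)
    also have "\<dots> = dm (Suc k) n w"
      unfolding dm_def fact_choose_Suc of_nat_mult by (simp add: mult_ac)
    finally show "deriv (\<lambda>w. dm k n w) w = dm (Suc k) n w" .
  qed
  finally show ?case .
qed

lemma dmon_dm: "dmon k n z = dm k n z"
  unfolding dmon_def dmon_fun ..

lemma dm_zero: "n < k \<Longrightarrow> dm k n z = 0"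
  by (simp add: dm_def binomial_eq_0)

lemma dm_diag: "dm n n (z::'a::comm_semiring_1) = of_nat (fact n)"
  by (simp add: dm_def)

lemma leib_term:
  fixes z :: "'a::comm_semiring_1"
  assumes "c \<le> k"
  shows "of_nat (k choose c) * dm c a z * dm (k - c) b z
       = of_nat (fact k * ((a choose c) * (b choose (k - c)))) * z ^ (a + b - k)"
proof (cases "c \<le> a \<and> k - c \<le> b")
  case True
  have e: "a - c + (b - (k - c)) = a + b - k" using True assms by arith
  have f: "(k choose c) * (fact c * (a choose c)) * (fact (k - c) * (b choose (k - c)))
      = fact k * ((a choose c) * (b choose (k - c)))"
    using binomial_fact_lemma[OF assms] by (simp add: algebra_simps)
  have "of_nat (k choose c) * dm c a z * dm (k - c) b z
     = of_nat ((k choose c) * (fact c * (a choose c)) * (fact (k - c) * (b choose (k - c)))) * (z ^ (a - c) * z ^ (b - (k - c)))"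
    unfolding dm_def by (simp add: algebra_simps)
  also have "\<dots> = of_nat (fact k * ((a choose c) * (b choose (k - c)))) * z ^ (a + b - k)"
    unfolding f power_add[symmetric] e ..
  finally show ?thesis .
next
  case False
  then have "(a choose c) = 0 \<or> (b choose (k - c)) = 0" by auto
  then show ?thesis unfolding dm_def by (auto simp: binomial_eq_0)
qed

lemma leibniz_dm:
  fixes z :: "'a::comm_semiring_1"
  shows "dm k (a + b) z = (\<Sum>c\<le>k. of_nat (k choose c) * dm c a z * dm (k - c) b z)"
proof -
  have "(\<Sum>c\<le>k. of_nat (k choose c) * dm c a z * dm (k - c) b z)
      = (\<Sum>c\<le>k. of_nat (fact k * ((a choose c) * (b choose (k - c)))) * z ^ (a + b - k))"
    by (rule sum.cong) (auto simp: leib_term)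
  also have "\<dots> = of_nat (fact k * (\<Sum>c\<le>k. (a choose c) * (b choose (k - c)))) * z ^ (a + b - k)"
    by (simp add: sum_distrib_left sum_distrib_right of_nat_sum)
  also have "\<dots> = dm k (a + b) z"
    unfolding vandermonde dm_def ..
  finally show ?thesis by simp
qed

lemma comp_nat:
  assumes "y \<le> a" "x \<le> a - y"
  shows "fact y * (a choose y) * (fact x * (a - y choose x)) = fact (x + y) * (a choose (x + y))"
proof -
  have h1: "fact x * fact (a - y - x) * (a - y choose x) = fact (a - y)"
    using binomial_fact_lemma[OF assms(2)] .
  have h2: "fact y * fact (a - y) * (a choose y) = fact a"
    using binomial_fact_lemma[OF assms(1)] .
  have h3: "fact (x + y) * fact (a - (x + y)) * (a choose (x + y)) = fact a"
    using binomial_fact_lemma[of "x + y" a] assms by simp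
  have eq: "a - y - x = a - (x + y)" by simp
  have "fact y * (a choose y) * (fact x * (a - y choose x)) * fact (a - (x + y))
       = fact (x + y) * (a choose (x + y)) * fact (a - (x + y))"
  proof -
    have "fact y * (a choose y) * (fact x * (a - y choose x)) * fact (a - (x + y))
       = fact y * (a choose y) * (fact x * fact (a - y - x) * (a - y choose x))"
      unfolding eq by (simp add: algebra_simps)
    also have "\<dots> = fact a" unfolding h1 using h2 by (simp add: algebra_simps)
    finally show ?thesis using h3 by (simp add: algebra_simps)
  qed
  moreover have "(fact (a - (x + y)) :: nat) \<noteq> 0" by simp
  ultimately show ?thesis by simp
qed

lemma comp_dm:
  fixes z :: "'a::comm_semiring_1"
  shows "of_nat (fact y * (a choose y)) * dm x (a - y) z = dm (x + y) a z"
proof (cases "y \<le> a \<and> x \<le> a - y")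
  case True
  have "of_nat (fact y * (a choose y)) * dm x (a - y) z
     = of_nat (fact y * (a choose y) * (fact x * (a - y choose x))) * z ^ (a - y - x)"
    unfolding dm_def by (simp add: algebra_simps)
  also have "\<dots> = dm (x + y) a z"
    unfolding comp_nat[OF True[THEN conjunct1] True[THEN conjunct2]] dm_def
    by (simp add: add.commute diff_diff_eq)
  finally show ?thesis .
next
  case False
  then have "y > a \<or> x > a - y" by auto
  moreover have "x + y > a" using calculation by auto
  ultimately show ?thesis unfolding dm_def by (auto simp: binomial_eq_0)
qed

lemma key_dm:
  fixes z :: "'a::comm_semiring_1"
  shows "dm (i + j) (a + b) z = (\<Sum>u\<le>i. \<Sum>s\<le>j.
     (of_nat (i choose u) * dm (s + (i - u)) a z) * (of_nat (j choose s) * dm (u + (j - s)) b z))"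
proof -
  have inner: "(\<Sum>s\<le>j. (of_nat (i choose u) * dm (s + (i - u)) a z) * (of_nat (j choose s) * dm (u + (j - s)) b z))
     = of_nat (fact i * ((a choose (i - u)) * (b choose u))) * dm j (a + b - i) z" if "u \<le> i" for u
  proof -
    have "(\<Sum>s\<le>j. (of_nat (i choose u) * dm (s + (i - u)) a z) * (of_nat (j choose s) * dm (u + (j - s)) b z))
      = (\<Sum>s\<le>j. (of_nat (i choose u) * (of_nat (fact (i - u) * (a choose (i - u))) * dm s (a - (i - u)) z))
           * (of_nat (j choose s) * (of_nat (fact u * (b choose u)) * dm (j - s) (b - u) z)))"
    proof (rule sum.cong[OF refl])
      fix s assume "s \<in> {..j}"
      show "(of_nat (i choose u) * dm (s + (i - u)) a z) * (of_nat (j choose s) * dm (u + (j - s)) b z)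
        = (of_nat (i choose u) * (of_nat (fact (i - u) * (a choose (i - u))) * dm s (a - (i - u)) z))
           * (of_nat (j choose s) * (of_nat (fact u * (b choose u)) * dm (j - s) (b - u) z))"
        using comp_dm[of "i - u" a s z] comp_dm[of u b "j - s" z] by (simp add: add.commute)
    qed
    also have "\<dots> = of_nat ((i choose u) * fact (i - u) * fact u * ((a choose (i - u)) * (b choose u)))
        * (\<Sum>s\<le>j. of_nat (j choose s) * dm s (a - (i - u)) z * dm (j - s) (b - u) z)"
      by (simp add: sum_distrib_left algebra_simps)
    also have "\<dots> = of_nat ((i choose u) * fact (i - u) * fact u * ((a choose (i - u)) * (b choose u)))
        * dm j (a - (i - u) + (b - u)) z"
      by (simp add: leibniz_dm)
    also have "\<dots> = of_nat (fact i * ((a choose (i - u)) * (b choose u))) * dm j (a + b - i) z"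
    proof (cases "i - u \<le> a \<and> u \<le> b")
      case True
      have "a - (i - u) + (b - u) = a + b - i" using True that by arith
      moreover have "(i choose u) * fact (i - u) * fact u = fact i"
        using binomial_fact_lemma[OF that] by (simp add: algebra_simps)
      ultimately show ?thesis by simp
    next
      case False
      then have "(a choose (i - u)) = 0 \<or> (b choose u) = 0" by (auto simp: binomial_eq_0)
      then show ?thesis by (elim disjE) (simp_all del: binomial_eq_0_iff)
    qed
    finally show ?thesis .
  qed
  have "(\<Sum>u\<le>i. \<Sum>s\<le>j. (of_nat (i choose u) * dm (s + (i - u)) a z) * (of_nat (j choose s) * dm (u + (j - s)) b z))
     = (\<Sum>u\<le>i. of_nat (fact i * ((a choose (i - u)) * (b choose u))) * dm j (a + b - i) z)"
    by (rule sum.cong[OF refl]) (rule inner, simp)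
  also have "\<dots> = of_nat (fact i * (\<Sum>u\<le>i. (b choose u) * (a choose (i - u)))) * dm j (a + b - i) z"
    by (simp add: sum_distrib_left sum_distrib_right of_nat_sum algebra_simps)
  also have "\<dots> = of_nat (fact i * ((a + b) choose i)) * dm j (a + b - i) z"
    unfolding vandermonde by (simp add: add.commute)
  also have "\<dots> = dm (j + i) (a + b) z" by (rule comp_dm)
  finally show ?thesis by (simp add: add.commute)
qed



lemma sum_blocks: fixes m q :: nat shows "(\<Sum>x<m*q. f x) = (\<Sum>p<m. \<Sum>c<q. f (p*q + c))"
proof (induction m)
  case 0 then show ?case by simp
next
  case (Suc m)
  have "(\<Sum>x<Suc m * q. f x) = (\<Sum>x<m*q + q. f x)" by (simp add: add.commute)
  also have "\<dots> = (\<Sum>x<m*q. f x) + (\<Sum>x\<in>{m*q..<m*q+q}. f x)"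
    using sum.atLeastLessThan_concat[of 0 "m*q" "m*q+q" f] by (simp add: lessThan_atLeast0)
  also have "(\<Sum>x\<in>{m*q..<m*q+q}. f x) = (\<Sum>c<q. f (m*q + c))"
    using sum.shift_bounds_nat_ivl[of f 0 "m*q" q] by (simp add: lessThan_atLeast0 add.commute)
  finally show ?case using Suc by simp
qed

lemma rank_sum_rank1:
  fixes F G :: "nat \<Rightarrow> nat \<Rightarrow> 'a::field"
  shows "vec_space.rank n (mat n nc (\<lambda>(k,l). \<Sum>t<N. F t k * G t l)) \<le> N"
proof (induction N)
  case 0
  have "mat n nc (\<lambda>(k,l). \<Sum>t<0. F t k * G t l) = 0\<^sub>m n nc"
    by (rule eq_matI) auto
  then show ?case by (simp only: vec_space.rank_0I)
next
  case (Suc N)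
  have eq: "mat n nc (\<lambda>(k,l). \<Sum>t<Suc N. F t k * G t l)
     = mat n nc (\<lambda>(k,l). \<Sum>t<N. F t k * G t l) + mat n nc (\<lambda>(k,l). F N k * G N l)"
    by (rule eq_matI) auto
  have "vec_space.rank n (mat n nc (\<lambda>(k,l). F N k * G N l)) \<le> 1"
    by (rule vec_space.rank_le_1_product_entries[of _ n nc "F N" "G N"]) auto
  moreover have "vec_space.rank n (mat n nc (\<lambda>(k,l). \<Sum>t<Suc N. F t k * G t l))
      \<le> vec_space.rank n (mat n nc (\<lambda>(k,l). \<Sum>t<N. F t k * G t l)) + vec_space.rank n (mat n nc (\<lambda>(k,l). F N k * G N l))"
    unfolding eq by (rule vec_space.rank_subadditive) auto
  ultimately show ?case using Suc by simp
qed

lemma tri_inj: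
  fixes M :: "'a::field mat" and \<rho> :: "nat \<Rightarrow> nat"
  assumes M: "M \<in> carrier_mat n n" and v: "v \<in> carrier_vec n" and Mv: "M *\<^sub>v v = 0\<^sub>v n"
    and psi: "\<And>l. l < n \<Longrightarrow> \<psi> l < n \<and> M $$ (\<psi> l, l) \<noteq> 0 \<and> (\<forall>l'<n. M $$ (\<psi> l, l') \<noteq> 0 \<longrightarrow> l' = l \<or> \<rho> l' < \<rho> l)"
  shows "v = 0\<^sub>v n"
proof -
  have "l < n \<longrightarrow> vec_index v l = 0" for l
  proof (induction l rule: measure_induct_rule[of \<rho>])
    case (less l)
    show ?case
    proof
      assume ln: "l < n"
      note p = psi[OF ln]
      have "0 = (M *\<^sub>v v) $ \<psi> l" using Mv p by simp
      also have "\<dots> = (\<Sum>l'\<in>{0..<n}. M $$ (\<psi> l, l') * vec_index v l')"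
        using M v p by (simp add: scalar_prod_def)
      also have "\<dots> = M $$ (\<psi> l, l) * vec_index v l + (\<Sum>l'\<in>{0..<n} - {l}. M $$ (\<psi> l, l') * vec_index v l')"
        using ln by (subst sum.remove[of _ l]) auto
      also have "(\<Sum>l'\<in>{0..<n} - {l}. M $$ (\<psi> l, l') * vec_index v l') = 0"
      proof (rule sum.neutral, rule ballI)
        fix l' assume l': "l' \<in> {0..<n} - {l}"
        show "M $$ (\<psi> l, l') * vec_index v l' = 0"
        proof (cases "M $$ (\<psi> l, l') = 0")
          case False
          then have "\<rho> l' < \<rho> l" using p l' by auto
          then have "vec_index v l' = 0" using less l' by auto
          then show ?thesis by simp
        qed simp
      qed
      finally show "vec_index v l = 0" using p by simp
    qed
  qed
  then show ?thesis using v by (intro eq_vecI) auto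
qed

lemma tri_det:
  fixes M :: "'a::field mat" and \<rho> :: "nat \<Rightarrow> nat"
  assumes M: "M \<in> carrier_mat n n"
    and psi: "\<And>l. l < n \<Longrightarrow> \<psi> l < n \<and> M $$ (\<psi> l, l) \<noteq> 0 \<and> (\<forall>l'<n. M $$ (\<psi> l, l') \<noteq> 0 \<longrightarrow> l' = l \<or> \<rho> l' < \<rho> l)"
  shows "det M \<noteq> 0"
proof
  assume "det M = 0"
  then obtain v where "v \<in> carrier_vec n" "v \<noteq> 0\<^sub>v n" "M *\<^sub>v v = 0\<^sub>v n"
    using det_0_iff_vec_prod_zero[OF M] by auto
  then show False using tri_inj[OF M _ _ psi] by blast
qed

lemma pick_image:
  fixes g :: "nat \<Rightarrow> nat" and n t :: nat
  assumes mono: "\<And>t t'. t < t' \<Longrightarrow> t' < n \<Longrightarrow> g t < g t'" and t: "t < n"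
  shows "pick (g ` {..<n}) t = g t"
proof -
  have "{a \<in> g ` {..<n}. a < g t} = g ` {..<t}"
  proof safe
    fix x assume "x < n" "g x < g t"
    then show "g x \<in> g ` {..<t}"
    proof (cases "x < t")
      case False
      then have "x = t \<or> t < x" by auto
      then show ?thesis using mono[of t x] \<open>x < n\<close> \<open>g x < g t\<close> by auto
    qed auto
  next
    fix x assume "x < t" then show "g x \<in> g ` {..<n}" "g x < g t" using t mono by auto
  qed
  moreover have "inj_on g {..<t}"
    by (rule inj_onI) (metis lessThan_iff mono nat_neq_iff order.strict_trans t less_irrefl)
  ultimately have "card {a \<in> g ` {..<n}. a < g t} = t" by (simp add: card_image)
  moreover have "g t \<in> g ` {..<n}" using t by simp
  ultimately show ?thesis using pick_card_in_set by metis
qed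

lemma card_image_mono:
  fixes g :: "nat \<Rightarrow> nat" and n :: nat
  assumes mono: "\<And>t t'. t < t' \<Longrightarrow> t' < n \<Longrightarrow> g t < g t'"
  shows "card (g ` {..<n}) = n"
proof -
  have "inj_on g {..<n}"
    proof (rule inj_onI)
    fix x y assume xy: "x \<in> {..<n}" "y \<in> {..<n}" "g x = g y"
    show "x = y"
    proof (rule ccontr)
      assume "x \<noteq> y"
      then have "x < y \<or> y < x" by auto
      then show False using mono[of x y] mono[of y x] xy by auto
    qed
  qed
  then show ?thesis by (simp add: card_image)
qed

lemma enc_mono:
  fixes m q t t' :: nat
  assumes "m \<le> q" "0 < m" "t < t'"
  shows "(t div m) * q + t mod m < (t' div m) * q + t' mod m"
proof -
  have le: "t div m \<le> t' div m" using assms by (simp add: div_le_mono)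
  show ?thesis
  proof (cases "t div m = t' div m")
    case True
    then have "t mod m < t' mod m"
      using assms(3) by (metis add_less_cancel_left div_mult_mod_eq)
    then show ?thesis using True by simp
  next
    case False
    then have "t div m + 1 \<le> t' div m" using le by simp
    then have "(t div m + 1) * q \<le> (t' div m) * q" by (rule mult_le_mono1)
    moreover have "t mod m < q" using assms by (meson mod_less_divisor order_less_le_trans)
    ultimately show ?thesis by simp
  qed
qed

lemma enc_div: "c < q \<Longrightarrow> (d * q + c) div (q::nat) = d"
  by simp
lemma enc_mod: "c < q \<Longrightarrow> (d * q + c) mod (q::nat) = c"
  by simp

lemma enc_bound:
  fixes m q t M :: nat
  assumes "m \<le> q" "0 < m" "t div m < M"
  shows "(t div m) * q + t mod m < M * q"
proof -
  have "t mod m < q" using assms by (meson mod_less_divisor order_less_le_trans)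
  then have "(t div m) * q + t mod m < (t div m + 1) * q" by simp
  also have "\<dots> \<le> M * q" using assms by (intro mult_le_mono1) simp
  finally show ?thesis .
qed



definition Xf :: "'a \<Rightarrow> nat \<Rightarrow> nat \<Rightarrow> nat \<Rightarrow> nat \<Rightarrow> 'a::comm_semiring_1" where
  "Xf z i a s u = (if u \<le> i then of_nat (i choose u) * dm (s + (i - u)) a z else 0)"

definition Yf :: "'a \<Rightarrow> nat \<Rightarrow> nat \<Rightarrow> nat \<Rightarrow> nat \<Rightarrow> 'a::comm_semiring_1" where
  "Yf z s u j b = (if s \<le> j then of_nat (j choose s) * dm (u + (j - s)) b z else 0)"

lemma key_full:
  fixes z :: "'a::comm_semiring_1"
  assumes i: "i < \<mu>" and a: "a < q" and j: "j < \<nu>" and b: "b < r"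
  shows "dm (i + j) (a + b) z = (\<Sum>s<min \<nu> q. \<Sum>u<min \<mu> r. Xf z i a s u * Yf z s u j b)"
proof -
  have step1: "(\<Sum>s\<le>j. (of_nat (i choose u) * dm (s + (i - u)) a z) * (of_nat (j choose s) * dm (u + (j - s)) b z))
      = (\<Sum>s<\<nu>. Xf z i a s u * Yf z s u j b)" if u: "u \<le> i" for u
    by (rule sum.mono_neutral_cong_left) (use u j in \<open>auto simp: Xf_def Yf_def\<close>)
  have "dm (i + j) (a + b) z = (\<Sum>u\<le>i. \<Sum>s<\<nu>. Xf z i a s u * Yf z s u j b)"
    unfolding key_dm by (rule sum.cong[OF refl]) (rule step1, simp)
  also have "\<dots> = (\<Sum>u<\<mu>. \<Sum>s<\<nu>. Xf z i a s u * Yf z s u j b)"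
    by (rule sum.mono_neutral_left) (use i in \<open>auto simp: Xf_def\<close>)
  also have "\<dots> = (\<Sum>u<min \<mu> r. \<Sum>s<\<nu>. Xf z i a s u * Yf z s u j b)"
  proof (rule sum.mono_neutral_right)
    show "\<forall>u\<in>{..<\<mu>} - {..<min \<mu> r}. (\<Sum>s<\<nu>. Xf z i a s u * Yf z s u j b) = 0"
    proof (intro ballI sum.neutral)
      fix u s assume u: "u \<in> {..<\<mu>} - {..<min \<mu> r}"
      then have "r \<le> u" by auto
      then show "Xf z i a s u * Yf z s u j b = 0"
        using b by (auto simp: Yf_def dm_zero)
    qed
  qed auto
  also have "\<dots> = (\<Sum>u<min \<mu> r. \<Sum>s<min \<nu> q. Xf z i a s u * Yf z s u j b)"
  proof (rule sum.cong[OF refl], rule sum.mono_neutral_right)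
    fix u
    show "\<forall>s\<in>{..<\<nu>} - {..<min \<nu> q}. Xf z i a s u * Yf z s u j b = 0"
    proof
      fix s assume s: "s \<in> {..<\<nu>} - {..<min \<nu> q}"
      then have "q \<le> s" by auto
      then show "Xf z i a s u * Yf z s u j b = 0"
        using a by (auto simp: Xf_def dm_zero)
    qed
  qed auto
  also have "\<dots> = (\<Sum>s<min \<nu> q. \<Sum>u<min \<mu> r. Xf z i a s u * Yf z s u j b)"
    by (rule sum.swap)
  finally show ?thesis .
qed

lemma dm_nz: "dm k n z \<noteq> 0 \<Longrightarrow> k \<le> n"
  using dm_zero by (metis not_le)

definition Hm :: "nat \<Rightarrow> nat \<Rightarrow> nat \<Rightarrow> nat \<Rightarrow> (nat \<Rightarrow> 'a) \<Rightarrow> (nat \<Rightarrow> 'a) \<Rightarrow> 'a \<Rightarrow> 'a::field_char_0 mat" where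
  "Hm q r \<mu> \<nu> \<alpha> \<beta> z = mat (\<mu> * q) (\<nu> * r)
     (\<lambda>(k,l). \<alpha> k * dm (k div q + l div r) (k mod q + l mod r) z * \<beta> l)"

lemma div_lt: "t < m * n \<Longrightarrow> t div n < (m::nat)"
  by (metis less_mult_imp_div_less mult.commute)

lemma rank_Hm:
  fixes z :: "'a::field_char_0"
  assumes q: "q > 0" and r: "r > 0" and mu: "\<mu> > 0" and nu: "\<nu> > 0"
    and \<alpha>: "\<And>k. \<alpha> k \<noteq> 0" and \<beta>: "\<And>l. \<beta> l \<noteq> 0"
  shows "vec_space.rank (\<mu> * q) (Hm q r \<mu> \<nu> \<alpha> \<beta> z) = min \<mu> r * min \<nu> q"
proof -
  define m1 where "m1 = min \<mu> r"
  define m2 where "m2 = min \<nu> q"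
  have m1: "0 < m1" "m1 \<le> \<mu>" "m1 \<le> r" using assms by (auto simp: m1_def)
  have m2: "0 < m2" "m2 \<le> \<nu>" "m2 \<le> q" using assms by (auto simp: m2_def)
  let ?H = "Hm q r \<mu> \<nu> \<alpha> \<beta> z"
  have Hc: "?H \<in> carrier_mat (\<mu> * q) (\<nu> * r)" by (simp add: Hm_def)
  have Hidx: "?H $$ (k, l) = \<alpha> k * dm (k div q + l div r) (k mod q + l mod r) z * \<beta> l"
    if "k < \<mu> * q" "l < \<nu> * r" for k l
    using that by (simp add: Hm_def)
  define F where "F t k = \<alpha> k * Xf z (k div q) (k mod q) (t div m1) (t mod m1)" for t k
  define G where "G t l = Yf z (t div m1) (t mod m1) (l div r) (l mod r) * \<beta> l" for t l
  have "?H = mat (\<mu> * q) (\<nu> * r) (\<lambda>(k,l). \<Sum>t<m2 * m1. F t k * G t l)"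
  proof (rule eq_matI)
    fix k l assume k: "k < dim_row (mat (\<mu> * q) (\<nu> * r) (\<lambda>(k,l). \<Sum>t<m2 * m1. F t k * G t l))"
      and l: "l < dim_col (mat (\<mu> * q) (\<nu> * r) (\<lambda>(k,l). \<Sum>t<m2 * m1. F t k * G t l))"
    then have k: "k < \<mu> * q" and l: "l < \<nu> * r" by auto
    have i: "k div q < \<mu>" using k by (rule div_lt)
    have j: "l div r < \<nu>" using l by (rule div_lt)
    have a: "k mod q < q" using q by simp
    have b: "l mod r < r" using r by simp
    have "(\<Sum>t<m2 * m1. F t k * G t l) = (\<Sum>s<m2. \<Sum>u<m1. F (s * m1 + u) k * G (s * m1 + u) l)"
      by (rule sum_blocks)
    also have "\<dots> = (\<Sum>s<m2. \<Sum>u<m1. \<alpha> k * (Xf z (k div q) (k mod q) s u * Yf z s u (l div r) (l mod r)) * \<beta> l)"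
      by (rule sum.cong[OF refl], rule sum.cong[OF refl]) (simp add: F_def G_def mult_ac)
    also have "\<dots> = \<alpha> k * (\<Sum>s<m2. \<Sum>u<m1. Xf z (k div q) (k mod q) s u * Yf z s u (l div r) (l mod r)) * \<beta> l"
      by (simp add: sum_distrib_left sum_distrib_right)
    also have "\<dots> = ?H $$ (k, l)"
      unfolding Hidx[OF k l] m1_def m2_def key_full[OF i a j b] ..
    finally show "?H $$ (k, l) = mat (\<mu> * q) (\<nu> * r) (\<lambda>(k,l). \<Sum>t<m2 * m1. F t k * G t l) $$ (k, l)"
      using k l by simp
  qed (auto simp: Hm_def)
  then have upper: "vec_space.rank (\<mu> * q) ?H \<le> m2 * m1"
    using rank_sum_rank1[where n="\<mu> * q" and nc="\<nu> * r" and F=F and N="m2 * m1" and G=G] by simp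
  define N where "N = m1 * m2"
  define g1 where "g1 t = (t div m2) * q + t mod m2" for t
  define g2 where "g2 t = (t div m1) * r + t mod m1" for t
  define I where "I = g1 ` {..<N}"
  define J where "J = g2 ` {..<N}"
  have mono1: "g1 t < g1 t'" if "t < t'" "t' < N" for t t'
    unfolding g1_def using enc_mono[OF m2(3) m2(1) that(1)] .
  have mono2: "g2 t < g2 t'" if "t < t'" "t' < N" for t t'
    unfolding g2_def using enc_mono[OF m1(3) m1(1) that(1)] .
  have g1b: "g1 t < \<mu> * q" if "t < N" for t
  proof -
    have "t div m2 < m1" using that by (simp add: N_def div_lt)
    then have "t div m2 < \<mu>" using m1 by simp
    then show ?thesis unfolding g1_def by (rule enc_bound[OF m2(3) m2(1)])
  qed
  have g2b: "g2 t < \<nu> * r" if "t < N" for t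
  proof -
    have "t div m1 < m2" using that by (simp add: N_def div_lt mult.commute)
    then have "t div m1 < \<nu>" using m2 by simp
    then show ?thesis unfolding g2_def by (rule enc_bound[OF m1(3) m1(1)])
  qed
  have cardI: "card {i. i < \<mu> * q \<and> i \<in> I} = N"
  proof -
    have "{i. i < \<mu> * q \<and> i \<in> I} = I" using g1b by (auto simp: I_def)
    then show ?thesis using card_image_mono[of N g1] mono1 by (simp add: I_def)
  qed
  have cardJ: "card {j. j < \<nu> * r \<and> j \<in> J} = N"
  proof -
    have "{j. j < \<nu> * r \<and> j \<in> J} = J" using g2b by (auto simp: J_def)
    then show ?thesis using card_image_mono[of N g2] mono2 by (simp add: J_def)
  qed
  have pickI: "pick I t = g1 t" if "t < N" for t
    unfolding I_def using pick_image[of N g1 t] mono1 that by blast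
  have pickJ: "pick J t = g2 t" if "t < N" for t
    unfolding J_def using pick_image[of N g2 t] mono2 that by blast
  have g1d: "g1 t div q = t div m2" "g1 t mod q = t mod m2" for t
  proof -
    have "t mod m2 < q" using m2 by (meson mod_less_divisor order_less_le_trans)
    then show "g1 t div q = t div m2" "g1 t mod q = t mod m2" unfolding g1_def by simp_all
  qed
  have g2d: "g2 t div r = t div m1" "g2 t mod r = t mod m1" for t
  proof -
    have "t mod m1 < r" using m1 by (meson mod_less_divisor order_less_le_trans)
    then show "g2 t div r = t div m1" "g2 t mod r = t mod m1" unfolding g2_def by simp_all
  qed
  define X where "X = mat N N (\<lambda>(t1,t). \<alpha> (g1 t1) * Xf z (t1 div m2) (t1 mod m2) (t div m1) (t mod m1))"
  define Y where "Y = mat N N (\<lambda>(t,t2). Yf z (t div m1) (t mod m1) (t2 div m1) (t2 mod m1) * \<beta> (g2 t2))"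
  have Xc: "X \<in> carrier_mat N N" and Yc: "Y \<in> carrier_mat N N" by (auto simp: X_def Y_def)
  have sub: "submatrix ?H I J = X * Y"
  proof (rule eq_matI)
    show "dim_row (submatrix ?H I J) = dim_row (X * Y)"
      using cardI Hc by (simp add: dim_submatrix X_def)
    show "dim_col (submatrix ?H I J) = dim_col (X * Y)"
      using cardJ Hc by (simp add: dim_submatrix Y_def)
    fix t1 t2 assume "t1 < dim_row (X * Y)" "t2 < dim_col (X * Y)"
    then have t1: "t1 < N" and t2: "t2 < N" by (auto simp: X_def Y_def)
    have i: "t1 div m2 < \<mu>" using t1 m1 by (simp add: N_def div_lt order_less_le_trans)
    have j: "t2 div m1 < \<nu>"
      using t2 m2 by (metis N_def div_lt mult.commute order_less_le_trans)
    have a: "t1 mod m2 < q" using m2 by (meson mod_less_divisor order_less_le_trans)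
    have b: "t2 mod m1 < r" using m1 by (meson mod_less_divisor order_less_le_trans)
    have "submatrix ?H I J $$ (t1, t2) = ?H $$ (g1 t1, g2 t2)"
      using submatrix_index[of t1 ?H I t2 J] t1 t2 cardI cardJ Hc pickI pickJ by simp
    also have "\<dots> = \<alpha> (g1 t1) * dm (t1 div m2 + t2 div m1) (t1 mod m2 + t2 mod m1) z * \<beta> (g2 t2)"
      using Hidx[OF g1b[OF t1] g2b[OF t2]] g1d g2d by simp
    also have "\<dots> = \<alpha> (g1 t1) * (\<Sum>s<m2. \<Sum>u<m1. Xf z (t1 div m2) (t1 mod m2) s u * Yf z s u (t2 div m1) (t2 mod m1)) * \<beta> (g2 t2)"
      unfolding key_full[OF i a j b, folded m1_def m2_def] ..
    also have "\<dots> = (\<Sum>s<m2. \<Sum>u<m1. X $$ (t1, s * m1 + u) * Y $$ (s * m1 + u, t2))"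
    proof -
      have "X $$ (t1, s * m1 + u) * Y $$ (s * m1 + u, t2)
          = \<alpha> (g1 t1) * (Xf z (t1 div m2) (t1 mod m2) s u * Yf z s u (t2 div m1) (t2 mod m1)) * \<beta> (g2 t2)"
        if "s < m2" "u < m1" for s u
      proof -
        have "s * m1 + u < N" using that enc_bound[OF order_refl m1(1), of "s * m1 + u" m2] by (simp add: N_def mult.commute)
        then show ?thesis using that t1 t2 by (simp add: X_def Y_def mult_ac)
      qed
      then show ?thesis by (simp add: sum_distrib_left sum_distrib_right)
    qed
    also have "\<dots> = (\<Sum>t<m2 * m1. X $$ (t1, t) * Y $$ (t, t2))"
      by (rule sum_blocks[symmetric])
    also have "\<dots> = (X * Y) $$ (t1, t2)"
      using t1 t2 Xc Yc by (auto simp: scalar_prod_def N_def mult.commute lessThan_atLeast0 intro!: sum.cong)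
    finally show "submatrix ?H I J $$ (t1, t2) = (X * Y) $$ (t1, t2)" .
  qed
  have dX: "det X \<noteq> 0"
  proof (rule tri_det[OF Xc, of "\<lambda>l. (l mod m1) * m2 + l div m1" "\<lambda>l. l div m1 + l mod m1"])
    fix l assume l: "l < N"
    define s where "s = l div m1"
    define u where "u = l mod m1"
    have s: "s < m2" using l by (simp add: s_def N_def div_lt mult.commute)
    have u: "u < m1" using m1 by (simp add: u_def)
    have lsu: "l = s * m1 + u" by (simp add: s_def u_def)
    have p: "u * m2 + s < N"
      using enc_bound[OF order_refl m2(1), of "u * m2 + s" m1] s u by (simp add: N_def)
    have pd: "(u * m2 + s) div m2 = u" "(u * m2 + s) mod m2 = s" using s by simp_all
    have "X $$ (u * m2 + s, l) = \<alpha> (g1 (u * m2 + s)) * Xf z u s s u"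
      using p l pd by (simp add: X_def s_def u_def)
    also have "\<dots> = \<alpha> (g1 (u * m2 + s)) * of_nat (fact s)"
      by (simp add: Xf_def dm_diag)
    finally have diag: "X $$ (u * m2 + s, l) \<noteq> 0" using \<alpha> by simp
    have off: "l' = l \<or> l' div m1 + l' mod m1 < l div m1 + l mod m1"
      if l': "l' < N" "X $$ (u * m2 + s, l') \<noteq> 0" for l'
    proof -
      define s' where "s' = l' div m1"
      define u' where "u' = l' mod m1"
      have "X $$ (u * m2 + s, l') = \<alpha> (g1 (u * m2 + s)) * Xf z u s s' u'"
        using p l' pd by (simp add: X_def s'_def u'_def)
      then have "Xf z u s s' u' \<noteq> 0" using l' by auto
      then have h: "u' \<le> u" "s' + (u - u') \<le> s"
        unfolding Xf_def by (auto split: if_splits dest!: dm_nz)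
      show ?thesis
      proof (cases "s' = s \<and> u' = u")
        case True
        then have "l' = l" by (metis True div_mult_mod_eq s'_def u'_def lsu)
        then show ?thesis by simp
      next
        case False
        then have "s' + u' < s + u" using h by auto
        then show ?thesis by (simp add: s'_def u'_def s_def u_def)
      qed
    qed
    show "(l mod m1) * m2 + l div m1 < N \<and> X $$ ((l mod m1) * m2 + l div m1, l) \<noteq> 0 \<and>
      (\<forall>l'<N. X $$ ((l mod m1) * m2 + l div m1, l') \<noteq> 0 \<longrightarrow> l' = l \<or> l' div m1 + l' mod m1 < l div m1 + l mod m1)"
      using p diag off by (simp add: s_def u_def)
  qed
  have dY: "det Y \<noteq> 0"
  proof (rule tri_det[OF Yc, of "\<lambda>l. l" "\<lambda>l. m1 + m2 - (l div m1 + l mod m1)"])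
    fix l assume l: "l < N"
    define s where "s = l div m1"
    define u where "u = l mod m1"
    have s: "s < m2" using l by (simp add: s_def N_def div_lt mult.commute)
    have u: "u < m1" using m1 by (simp add: u_def)
    have lsu: "l = s * m1 + u" by (simp add: s_def u_def)
    have "Y $$ (l, l) = Yf z s u s u * \<beta> (g2 l)"
      using l by (simp add: Y_def s_def u_def)
    also have "\<dots> = of_nat (fact u) * \<beta> (g2 l)"
      by (simp add: Yf_def dm_diag)
    finally have diag: "Y $$ (l, l) \<noteq> 0" using \<beta> by simp
    have off: "l' = l \<or> m1 + m2 - (l' div m1 + l' mod m1) < m1 + m2 - (l div m1 + l mod m1)"
      if l': "l' < N" "Y $$ (l, l') \<noteq> 0" for l'
    proof -
      define j where "j = l' div m1"
      define b where "b = l' mod m1"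
      have j: "j < m2" using l' by (simp add: j_def N_def div_lt mult.commute)
      have b: "b < m1" using m1 by (simp add: b_def)
      have "Y $$ (l, l') = Yf z s u j b * \<beta> (g2 l')"
        using l l' by (simp add: Y_def s_def u_def j_def b_def)
      then have "Yf z s u j b \<noteq> 0" using l' by auto
      then have h: "s \<le> j" "u + (j - s) \<le> b"
        unfolding Yf_def by (auto split: if_splits dest!: dm_nz)
      show ?thesis
      proof (cases "j = s \<and> b = u")
        case True
        then have "l' = l" by (metis True div_mult_mod_eq j_def b_def lsu)
        then show ?thesis by simp
      next
        case False
        then have "s + u < j + b" using h by auto
        moreover have "j + b \<le> m1 + m2" using j b by simp
        ultimately have "m1 + m2 - (j + b) < m1 + m2 - (s + u)" by arith
        then show ?thesis by (simp add: j_def b_def s_def u_def)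
      qed
    qed
    show "l < N \<and> Y $$ (l, l) \<noteq> 0 \<and>
      (\<forall>l'<N. Y $$ (l, l') \<noteq> 0 \<longrightarrow> l' = l \<or> m1 + m2 - (l' div m1 + l' mod m1) < m1 + m2 - (l div m1 + l mod m1))"
      using l diag off by blast
  qed
  have "det (submatrix ?H I J) \<noteq> 0"
    unfolding sub det_mult[OF Xc Yc] using dX dY by simp
  from vec_space.rank_gt_minor[OF Hc this] cardJ
  have lower: "N \<le> vec_space.rank (\<mu> * q) ?H" by simp
  show ?thesis using upper lower by (simp add: N_def m1_def m2_def mult.commute)
qed



lemma kron_left_mult:
  fixes U B :: "'a::comm_ring_1 mat"
  assumes U: "U \<in> carrier_mat q q" and B: "B \<in> carrier_mat (\<mu> * q) nc"
    and k: "k < \<mu> * q" and l: "l < nc"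
  shows "(kron (1\<^sub>m \<mu>) U * B) $$ (k, l) = (\<Sum>c<q. U $$ (k mod q, c) * B $$ ((k div q) * q + c, l))"
proof -
  have q: "q > 0" using k by (cases q) auto
  have kd: "k div q < \<mu>" using k by (simp add: div_lt)
  have "(kron (1\<^sub>m \<mu>) U * B) $$ (k, l) = (\<Sum>x<\<mu> * q. kron (1\<^sub>m \<mu>) U $$ (k, x) * B $$ (x, l))"
    using U B k l by (simp add: kron_def scalar_prod_def lessThan_atLeast0)
  also have "\<dots> = (\<Sum>p<\<mu>. \<Sum>c<q. kron (1\<^sub>m \<mu>) U $$ (k, p * q + c) * B $$ (p * q + c, l))"
    by (rule sum_blocks)
  also have "\<dots> = (\<Sum>p<\<mu>. if p = k div q then (\<Sum>c<q. U $$ (k mod q, c) * B $$ (p * q + c, l)) else 0)"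
  proof (rule sum.cong[OF refl])
    fix p assume p: "p \<in> {..<\<mu>}"
    have "kron (1\<^sub>m \<mu>) U $$ (k, p * q + c) = (if k div q = p then U $$ (k mod q, c) else 0)" if c: "c < q" for c
    proof -
      have "p * q + c < \<mu> * q" using enc_bound[OF order_refl q, of "p * q + c" \<mu>] c p by simp
      then show ?thesis using U k kd c p by (simp add: kron_def)
    qed
    then show "(\<Sum>c<q. kron (1\<^sub>m \<mu>) U $$ (k, p * q + c) * B $$ (p * q + c, l))
        = (if p = k div q then (\<Sum>c<q. U $$ (k mod q, c) * B $$ (p * q + c, l)) else 0)"
      by (auto intro!: sum.neutral)
  qed
  also have "\<dots> = (\<Sum>c<q. U $$ (k mod q, c) * B $$ ((k div q) * q + c, l))"
    using kd by (simp add: sum.delta')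
  finally show ?thesis .
qed

lemma kron_right_mult:
  fixes W B :: "'a::comm_ring_1 mat"
  assumes W: "W \<in> carrier_mat r r" and B: "B \<in> carrier_mat nr (\<nu> * r)"
    and k: "k < nr" and l: "l < \<nu> * r"
  shows "(B * kron (1\<^sub>m \<nu>) W) $$ (k, l) = (\<Sum>d<r. B $$ (k, (l div r) * r + d) * W $$ (d, l mod r))"
proof -
  have r: "r > 0" using l by (cases r) auto
  have ld: "l div r < \<nu>" using l by (simp add: div_lt)
  have "(B * kron (1\<^sub>m \<nu>) W) $$ (k, l) = (\<Sum>x<\<nu> * r. B $$ (k, x) * kron (1\<^sub>m \<nu>) W $$ (x, l))"
    using W B k l by (simp add: kron_def scalar_prod_def lessThan_atLeast0)
  also have "\<dots> = (\<Sum>p<\<nu>. \<Sum>d<r. B $$ (k, p * r + d) * kron (1\<^sub>m \<nu>) W $$ (p * r + d, l))"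
    by (rule sum_blocks)
  also have "\<dots> = (\<Sum>p<\<nu>. if p = l div r then (\<Sum>d<r. B $$ (k, p * r + d) * W $$ (d, l mod r)) else 0)"
  proof (rule sum.cong[OF refl])
    fix p assume p: "p \<in> {..<\<nu>}"
    have "kron (1\<^sub>m \<nu>) W $$ (p * r + d, l) = (if p = l div r then W $$ (d, l mod r) else 0)" if d: "d < r" for d
    proof -
      have "p * r + d < \<nu> * r" using enc_bound[OF order_refl r, of "p * r + d" \<nu>] d p by simp
      then show ?thesis using W l ld d p by (simp add: kron_def)
    qed
    then show "(\<Sum>d<r. B $$ (k, p * r + d) * kron (1\<^sub>m \<nu>) W $$ (p * r + d, l))
        = (if p = l div r then (\<Sum>d<r. B $$ (k, p * r + d) * W $$ (d, l mod r)) else 0)"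
      by (auto intro!: sum.neutral)
  qed
  also have "\<dots> = (\<Sum>d<r. B $$ (k, (l div r) * r + d) * W $$ (d, l mod r))"
    using ld by (simp add: sum.delta')
  finally show ?thesis .
qed

lemma conv_sum:
  fixes z :: "'a::comm_ring_1"
  assumes a: "a < q" and b: "b < r"
  shows "(\<Sum>d<r. (\<Sum>c<q. dm c a z * (if c + d = K then of_nat (K choose c) else 0)) * dm d b z)
       = dm K (a + b) z"
proof -
  define T where "T c = of_nat (K choose c) * dm c a z * dm (K - c) b z" for c
  have "(\<Sum>d<r. (\<Sum>c<q. dm c a z * (if c + d = K then of_nat (K choose c) else 0)) * dm d b z)
      = (\<Sum>c<q. \<Sum>d<r. dm c a z * (if c + d = K then of_nat (K choose c) else 0) * dm d b z)"
    by (simp add: sum_distrib_right sum.swap[of _ "{..<q}"])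
  also have "\<dots> = (\<Sum>c<q. if c \<le> K then T c else 0)"
  proof (rule sum.cong[OF refl])
    fix c assume c: "c \<in> {..<q}"
    have "(\<Sum>d<r. dm c a z * (if c + d = K then of_nat (K choose c) else 0) * dm d b z)
       = (\<Sum>d<r. if d = K - c then (if c \<le> K then T c else 0) else 0)"
      by (rule sum.cong[OF refl]) (auto simp: T_def mult_ac)
    also have "\<dots> = (if c \<le> K then T c else 0)"
    proof (cases "K - c < r")
      case False
      then have "dm (K - c) b z = 0" using b by (intro dm_zero) simp
      then show ?thesis by (simp add: T_def)
    qed auto
    finally show "(\<Sum>d<r. dm c a z * (if c + d = K then of_nat (K choose c) else 0) * dm d b z)
       = (if c \<le> K then T c else 0)" .
  qed
  also have "\<dots> = (\<Sum>c\<in>{..<q} \<inter> {c. c \<le> K}. T c)"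
    by (simp add: sum.inter_restrict)
  also have "\<dots> = (\<Sum>c\<le>K. T c)"
  proof (rule sum.mono_neutral_left)
    show "\<forall>c\<in>{..K} - {..<q} \<inter> {c. c \<le> K}. T c = 0"
    proof
      fix c assume "c \<in> {..K} - {..<q} \<inter> {c. c \<le> K}"
      then have "q \<le> c" by auto
      then have "dm c a z = 0" using a by (intro dm_zero) simp
      then show "T c = 0" by (simp add: T_def)
    qed
  qed auto
  also have "\<dots> = dm K (a + b) z"
    unfolding T_def leibniz_dm ..
  finally show ?thesis .
qed



lemma AA_entry:
  assumes "a < q" "b < r"
  shows "(if a + b = K then real (K choose a) else 0)
     = 1 / fact a * dm K (a + b) (0::real) * (1 / fact b)"
proof (cases "a + b = K")
  case True
  have "real (K choose a) = fact K / (fact a * fact b)"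
  proof -
    have "K - a = b" "a \<le> K" using True by auto
    then show ?thesis using binomial_fact[of a K] by simp
  qed
  then show ?thesis using True by (simp add: dm_def)
next
  case False
  then show ?thesis by (cases "a + b < K") (auto simp: dm_def)
qed

theorem proposition3p1:
  fixes q r \<mu> \<nu> :: nat
  assumes "q > 0" and "r > 0" and "\<mu> > 0" and "\<nu> > 0"
  shows "(\<forall>z::complex. MM q r \<mu> \<nu> z =
             kron (1\<^sub>m \<mu>) (Uq q z) * map_mat complex_of_real (AA q r \<mu> \<nu>) * kron (1\<^sub>m \<nu>) (Wr r z))
       \<and> (\<forall>z::complex. vec_space.rank (\<mu> * q) (MM q r \<mu> \<nu> z) = vec_space.rank (\<mu> * q) (AA q r \<mu> \<nu>))
       \<and> vec_space.rank (\<mu> * q) (AA q r \<mu> \<nu>) = min \<mu> r * min \<nu> q"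
proof -
  have AAH: "AA q r \<mu> \<nu> = Hm q r \<mu> \<nu> (\<lambda>k. 1 / fact (k mod q)) (\<lambda>l. 1 / fact (l mod r)) (0::real)"
  proof (rule eq_matI)
    fix k l assume "k < dim_row (Hm q r \<mu> \<nu> (\<lambda>k. 1 / fact (k mod q)) (\<lambda>l. 1 / fact (l mod r)) (0::real))"
      "l < dim_col (Hm q r \<mu> \<nu> (\<lambda>k. 1 / fact (k mod q)) (\<lambda>l. 1 / fact (l mod r)) (0::real))"
    then have k: "k < \<mu> * q" and l: "l < \<nu> * r" by (auto simp: Hm_def)
    have a: "k mod q < q" and b: "l mod r < r" using assms by auto
    show "AA q r \<mu> \<nu> $$ (k, l) = Hm q r \<mu> \<nu> (\<lambda>k. 1 / fact (k mod q)) (\<lambda>l. 1 / fact (l mod r)) 0 $$ (k, l)"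
      using k l a b AA_entry[OF a b, of "k div q + l div r"]
      by (simp add: AA_def hankel_blocks_def Ak_def Hm_def)
  qed (auto simp: AA_def hankel_blocks_def Hm_def)
  have rankAA: "vec_space.rank (\<mu> * q) (AA q r \<mu> \<nu>) = min \<mu> r * min \<nu> q"
    unfolding AAH by (rule rank_Hm) (use assms in auto)
  have MMH: "MM q r \<mu> \<nu> z = Hm q r \<mu> \<nu> (\<lambda>_. 1) (\<lambda>_. 1) z" for z
    by (rule eq_matI) (use assms in \<open>auto simp: MM_def hankel_blocks_def Mder_def Hm_def dmon_dm\<close>)
  have rankMM: "vec_space.rank (\<mu> * q) (MM q r \<mu> \<nu> z) = min \<mu> r * min \<nu> q" for z
    unfolding MMH by (rule rank_Hm) (use assms in auto)
  have fact1: "MM q r \<mu> \<nu> z =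
       kron (1\<^sub>m \<mu>) (Uq q z) * map_mat complex_of_real (AA q r \<mu> \<nu>) * kron (1\<^sub>m \<nu>) (Wr r z)" for z
  proof -
    let ?P = "kron (1\<^sub>m \<mu>) (Uq q z)"
    let ?A = "map_mat complex_of_real (AA q r \<mu> \<nu>)"
    let ?Q = "kron (1\<^sub>m \<nu>) (Wr r z)"
    have Uc: "Uq q z \<in> carrier_mat q q" by (simp add: Uq_def)
    have Wc: "Wr r z \<in> carrier_mat r r" by (simp add: Wr_def)
    have Ac: "?A \<in> carrier_mat (\<mu> * q) (\<nu> * r)" by (simp add: AA_def hankel_blocks_def)
    have Pc: "?P \<in> carrier_mat (\<mu> * q) (\<mu> * q)" by (simp add: kron_def Uq_def)
    have Qc: "?Q \<in> carrier_mat (\<nu> * r) (\<nu> * r)" by (simp add: kron_def Wr_def)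
    have PAc: "?P * ?A \<in> carrier_mat (\<mu> * q) (\<nu> * r)" using Pc Ac by simp
    show ?thesis
    proof (rule eq_matI)
      fix k l assume "k < dim_row (?P * ?A * ?Q)" "l < dim_col (?P * ?A * ?Q)"
      then have k: "k < \<mu> * q" and l: "l < \<nu> * r" using PAc Qc by auto
      define i a j b where "i = k div q" "a = k mod q" "j = l div r" "b = l mod r"
      have a: "a < q" and b: "b < r" using assms by (auto simp: i_a_j_b_def)
      have i: "i < \<mu>" using k by (simp add: i_a_j_b_def div_lt)
      have j: "j < \<nu>" using l by (simp add: i_a_j_b_def div_lt)
      have "(?P * ?A * ?Q) $$ (k, l) = (\<Sum>d<r. (?P * ?A) $$ (k, j * r + d) * Wr r z $$ (d, b))"
        using kron_right_mult[OF Wc PAc k l] by (simp add: i_a_j_b_def)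
      also have "\<dots> = (\<Sum>d<r. (\<Sum>c<q. dm c a z * (if c + d = i + j then of_nat (i + j choose c) else 0)) * dm d b z)"
      proof (rule sum.cong[OF refl])
        fix d assume d: "d \<in> {..<r}"
        have jd: "j * r + d < \<nu> * r" using enc_bound[OF order_refl \<open>r > 0\<close>, of "j * r + d" \<nu>] d j by simp
        have "(?P * ?A) $$ (k, j * r + d) = (\<Sum>c<q. Uq q z $$ (a, c) * ?A $$ (i * q + c, j * r + d))"
          using kron_left_mult[OF Uc Ac k jd] by (simp add: i_a_j_b_def)
        also have "\<dots> = (\<Sum>c<q. dm c a z * (if c + d = i + j then of_nat (i + j choose c) else 0))"
        proof (rule sum.cong[OF refl])
          fix c assume c: "c \<in> {..<q}"
          have ic: "i * q + c < \<mu> * q" using enc_bound[OF order_refl \<open>q > 0\<close>, of "i * q + c" \<mu>] c i by simp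
          show "Uq q z $$ (a, c) * ?A $$ (i * q + c, j * r + d)
              = dm c a z * (if c + d = i + j then of_nat (i + j choose c) else 0)"
            using ic jd a c d by (simp add: Uq_def AA_def hankel_blocks_def Ak_def dmon_dm)
        qed
        finally show "(?P * ?A) $$ (k, j * r + d) * Wr r z $$ (d, b)
          = (\<Sum>c<q. dm c a z * (if c + d = i + j then of_nat (i + j choose c) else 0)) * dm d b z"
          using d b by (simp add: Wr_def dmon_dm)
      qed
      also have "\<dots> = dm (i + j) (a + b) z" by (rule conv_sum[OF a b])
      also have "\<dots> = MM q r \<mu> \<nu> z $$ (k, l)"
        using k l a b by (simp add: MM_def hankel_blocks_def Mder_def dmon_dm i_a_j_b_def)
      finally show "MM q r \<mu> \<nu> z $$ (k, l) = (?P * ?A * ?Q) $$ (k, l)" by simp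
    qed (use PAc Qc in \<open>auto simp: MM_def hankel_blocks_def\<close>)
  qed
  show ?thesis using fact1 rankAA rankMM by simp
qed


end
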